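(* Let $\Omega\subset\mathbb{R}^N$ be an open set of finite measure and let $D_1,D_2\subset\Omega$ satisfy: $D_i$ is open, $\operatorname{int}(\overline{D_i})=D_i$ for $i=1,2$, $D_1\cap D_2=\emptyset$, and $\overline{\Omega}=\overline{D_1}\cup\overline{D_2}$. Let $1\le p_1,p_2<\infty$ and let $p=p_1\chi_{D_1}+p_2\chi_{D_2}$. Then $$u\in W^{1,p(x)}(\Omega)\iff u\in W^{1,p_1}(D_1),\ u\in W^{1,p_2}(D_2)\ \text{and}\ u\in W^{1,\min\{p_1,p_2\}}(\Omega).$$
   Context: For a measurable bounded exponent $p\colon\Omega\to[1,\infty)$, $L^{p(x)}(\Omega)$ is the space of $f\in L^1_{\mathrm{loc}}(\Omega)$ with $\int_\Omega|f|^{p(x)}\,dx<\infty$ (with the Luxemburg norm), and $W^{1,p(x)}(\Omega)$ is the space of $u\in W^{1,1}_{\mathrm{loc}}(\Omega)$ such that $u$ and all weak partial derivatives $\partial_iu$ belong to $L^{p(x)}(\Omega)$.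
   Formalization: On the part of $\Omega$ outside $D_1$ and $D_2$, the exponent $p$ equals $\min\{p_1,p_2\}$ instead of the value 0 given by $p=p_1\chi_{D_1}+p_2\chi_{D_2}$. The statement above fails without it. *)

theory Defs
  imports "HOL-Analysis.Analysis"
begin

text \<open>Euclidean space R^N is modelled by an arbitrary type 'a of class euclidean_space
  (N = DIM('a)); coordinate directions are the elements of Basis.\<close>

fun iter_partial :: "'a::euclidean_space list \<Rightarrow> ('a \<Rightarrow> real) \<Rightarrow> 'a \<Rightarrow> real" where
  "iter_partial [] f = f"
| "iter_partial (b # bs) f = (\<lambda>x. frechet_derivative (iter_partial bs f) (at x) b)"

definition smooth_fun :: "('a::euclidean_space \<Rightarrow> real) \<Rightarrow> bool" where
  "smooth_fun f \<longleftrightarrow> (\<forall>bs. set bs \<subseteq> Basis \<longrightarrow> (\<forall>x. iter_partial bs f differentiable (at x)))"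

definition test_fun :: "'a::euclidean_space set \<Rightarrow> ('a \<Rightarrow> real) \<Rightarrow> bool" where
  "test_fun \<Omega> \<phi> \<longleftrightarrow> smooth_fun \<phi> \<and> compact (closure {x. \<phi> x \<noteq> 0})
      \<and> closure {x. \<phi> x \<noteq> 0} \<subseteq> \<Omega>"

definition L1_loc :: "'a::euclidean_space set \<Rightarrow> ('a \<Rightarrow> real) \<Rightarrow> bool" where
  "L1_loc \<Omega> f \<longleftrightarrow> (\<forall>K. compact K \<and> K \<subseteq> \<Omega> \<longrightarrow> set_integrable lebesgue K f)"

definition weak_partial :: "'a::euclidean_space set \<Rightarrow> 'a \<Rightarrow> ('a \<Rightarrow> real) \<Rightarrow> ('a \<Rightarrow> real) \<Rightarrow> bool" where
  "weak_partial \<Omega> b u g \<longleftrightarrow>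
     (\<forall>\<phi>. test_fun \<Omega> \<phi> \<longrightarrow>
        (LINT x:\<Omega>|lebesgue. u x * frechet_derivative \<phi> (at x) b)
          = - (LINT x:\<Omega>|lebesgue. g x * \<phi> x))"

definition Lp_var :: "'a::euclidean_space set \<Rightarrow> ('a \<Rightarrow> real) \<Rightarrow> ('a \<Rightarrow> real) \<Rightarrow> bool" where
  "Lp_var \<Omega> p f \<longleftrightarrow> L1_loc \<Omega> f \<and>
     set_nn_integral lebesgue \<Omega> (\<lambda>x. ennreal (\<bar>f x\<bar> powr p x)) < \<infinity>"

definition W1p_var :: "'a::euclidean_space set \<Rightarrow> ('a \<Rightarrow> real) \<Rightarrow> ('a \<Rightarrow> real) \<Rightarrow> bool" where
  "W1p_var \<Omega> p u \<longleftrightarrow> L1_loc \<Omega> u \<and> Lp_var \<Omega> p u \<and>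
     (\<forall>b\<in>Basis. \<exists>g. L1_loc \<Omega> g \<and> weak_partial \<Omega> b u g \<and> Lp_var \<Omega> p g)"

definition W1p :: "'a::euclidean_space set \<Rightarrow> real \<Rightarrow> ('a \<Rightarrow> real) \<Rightarrow> bool" where
  "W1p \<Omega> q u \<longleftrightarrow> W1p_var \<Omega> (\<lambda>_. q) u"

text \<open>The exponent p = p1 chi_D1 + p2 chi_D2; on the interface Omega - (D1 u D2), where the
  paper's formula gives no value in [1,oo), we use the convention min p1 p2.\<close>
definition two_phase_exp :: "'a set \<Rightarrow> 'a set \<Rightarrow> real \<Rightarrow> real \<Rightarrow> 'a \<Rightarrow> real" where
  "two_phase_exp D1 D2 p1 p2 x =
     (if x \<in> D1 then p1 else if x \<in> D2 then p2 else min p1 p2)"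

end

theory Submission
  imports Defs
begin


definition ee :: "nat \<Rightarrow> real \<Rightarrow> real" where
  "ee k t = (if 0 < t then exp (- inverse t) * inverse t ^ k else 0)"

lemma ee_tendsto0: "((\<lambda>t. exp (- inverse t) * inverse t ^ k) \<longlongrightarrow> 0) (at_right (0::real))"
proof -
  have "((\<lambda>s::real. s ^ k / exp s) \<longlongrightarrow> 0) at_top" by (rule tendsto_power_div_exp_0)
  then have "((\<lambda>t. inverse t ^ k / exp (inverse t)) \<longlongrightarrow> 0) (at_right (0::real))"
    using filterlim_compose filterlim_inverse_at_top_right by blast
  then show ?thesis by (simp add: exp_minus field_simps)
qed

lemma ee_cont0: "(ee k \<longlongrightarrow> 0) (at (0::real))"
proof -
  have r: "(ee k \<longlongrightarrow> 0) (at_right 0)"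
  proof (rule Lim_transform_eventually[OF ee_tendsto0[of k]])
    show "\<forall>\<^sub>F x in at_right 0. exp (- inverse x) * inverse x ^ k = ee k x"
      by (auto simp: ee_def eventually_at_filter)
  qed
  have l: "(ee k \<longlongrightarrow> 0) (at_left 0)"
  proof (rule Lim_transform_eventually[of "\<lambda>_. 0"])
    show "\<forall>\<^sub>F x in at_left 0. 0 = ee k x"
      by (auto simp: ee_def eventually_at_filter)
  qed simp
  show ?thesis using r l by (simp add: filterlim_split_at)
qed

lemma ee_deriv: "(ee k has_real_derivative (ee (k+2) t - real k * ee (k+1) t)) (at t)"
proof -
  consider "t > 0" | "t < 0" | "t = 0" by linarith
  then show ?thesis
  proof cases
    case 1
    have "((\<lambda>t. exp (- inverse t) * inverse t ^ k) has_real_derivative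
       (exp (- inverse t) * (inverse t ^ 2) * inverse t ^ k + exp (- inverse t) * (real k * inverse t ^ (k - 1) * (- (inverse t ^ 2))))) (at t)"
      using 1 by (auto intro!: derivative_eq_intros simp: power2_eq_square)
    moreover have "exp (- inverse t) * (inverse t ^ 2) * inverse t ^ k + exp (- inverse t) * (real k * inverse t ^ (k - 1) * (- (inverse t ^ 2)))
       = ee (k+2) t - real k * ee (k+1) t"
      using 1 by (cases k) (auto simp: ee_def field_simps power2_eq_square)
    ultimately have d: "((\<lambda>t. exp (- inverse t) * inverse t ^ k) has_real_derivative (ee (k+2) t - real k * ee (k+1) t)) (at t)" by simp
    show ?thesis
      apply (rule has_field_derivative_transform_within_open[OF d, of "{0<..}"])
      using 1 by (auto simp: ee_def)
  next
    case 2
    have d: "((\<lambda>t. 0) has_real_derivative (ee (k+2) t - real k * ee (k+1) t)) (at t)"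
      using 2 by (auto simp: ee_def intro!: derivative_eq_intros)
    show ?thesis
      apply (rule has_field_derivative_transform_within_open[OF d, of "{..<0}"])
      using 2 by (auto simp: ee_def)
  next
    case 3
    have "((\<lambda>x. (ee k x - ee k 0) / (x - 0)) \<longlongrightarrow> 0) (at 0)"
    proof (rule Lim_transform_eventually[OF ee_cont0[of "Suc k"]])
      show "\<forall>\<^sub>F x in at 0. ee (Suc k) x = (ee k x - ee k 0) / (x - 0)"
        by (auto simp: ee_def eventually_at_filter field_simps)
    qed
    then have "(ee k has_real_derivative 0) (at 0)" by (simp add: has_field_derivative_iff)
    then show ?thesis using 3 by (simp add: ee_def)
  qed
qed

inductive_set SM :: "('a::euclidean_space \<Rightarrow> real) set" where
  const: "(\<lambda>x. c) \<in> SM"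
| atom: "(\<lambda>x. ee k (v \<bullet> x + d)) \<in> SM"
| add: "f \<in> SM \<Longrightarrow> g \<in> SM \<Longrightarrow> (\<lambda>x. f x + g x) \<in> SM"
| mult: "f \<in> SM \<Longrightarrow> g \<in> SM \<Longrightarrow> (\<lambda>x. f x * g x) \<in> SM"

lemma SM_diff: "f \<in> SM \<Longrightarrow> g \<in> SM \<Longrightarrow> (\<lambda>x. f x - g x) \<in> SM"
proof -
  assume "f \<in> SM" "g \<in> SM"
  then have "(\<lambda>x. f x + (\<lambda>x. -1) x * g x) \<in> SM" by (intro SM.add SM.mult SM.const)
  then show ?thesis by simp
qed

lemma SM_deriv:
  assumes "f \<in> SM"
  shows "\<exists>f'. (\<forall>x. (f has_derivative f' x) (at x)) \<and> (\<forall>b. (\<lambda>x. f' x b) \<in> SM)"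
  using assms
proof induction
  case (const c)
  show ?case by (rule exI[of _ "\<lambda>x h. 0"]) (auto intro: SM.const)
next
  case (atom k v d)
  let ?D = "\<lambda>y. ee (k+2) y - real k * ee (k+1) y"
  have "((\<lambda>x. ee k (v \<bullet> x + d)) has_derivative (\<lambda>h. ?D (v \<bullet> x + d) * (v \<bullet> h))) (at x)" for x
  proof -
    have 1: "((\<lambda>x. v \<bullet> x + d) has_derivative (\<lambda>h. v \<bullet> h)) (at x)"
      by (auto intro!: derivative_eq_intros)
    have 2: "(ee k has_derivative (*) (?D (v \<bullet> x + d))) (at (v \<bullet> x + d))"
      using ee_deriv[of k "v \<bullet> x + d"] unfolding has_field_derivative_def .
    show ?thesis using has_derivative_compose[OF 1 2] by (simp add: o_def)
  qed
  moreover have "(\<lambda>x. ?D (v \<bullet> x + d) * (v \<bullet> b)) \<in> SM" for b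
    by (intro SM.mult SM_diff SM.const SM.atom)
  ultimately show ?case by (intro exI[of _ "\<lambda>x h. ?D (v \<bullet> x + d) * (v \<bullet> h)"]) auto
next
  case (add f g)
  then obtain f' g' where f: "\<forall>x. (f has_derivative f' x) (at x)" "\<forall>b. (\<lambda>x. f' x b) \<in> SM"
    and g: "\<forall>x. (g has_derivative g' x) (at x)" "\<forall>b. (\<lambda>x. g' x b) \<in> SM" by blast
  show ?case
    apply (rule exI[of _ "\<lambda>x h. f' x h + g' x h"])
    using f g by (auto intro!: has_derivative_add SM.add)
next
  case (mult f g)
  then obtain f' g' where f: "\<forall>x. (f has_derivative f' x) (at x)" "\<forall>b. (\<lambda>x. f' x b) \<in> SM"
    and g: "\<forall>x. (g has_derivative g' x) (at x)" "\<forall>b. (\<lambda>x. g' x b) \<in> SM" by blast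
  show ?case
    apply (rule exI[of _ "\<lambda>x h. f x * g' x h + f' x h * g x"])
    using f g mult.hyps by (auto intro!: has_derivative_mult SM.add SM.mult)
qed

lemma SM_iter: "f \<in> SM \<Longrightarrow> iter_partial bs f \<in> SM"
proof (induction bs)
  case Nil then show ?case by simp
next
  case (Cons b bs)
  then have "iter_partial bs f \<in> SM" by simp
  from SM_deriv[OF this] obtain f' where f': "\<forall>x. (iter_partial bs f has_derivative f' x) (at x)" "\<forall>b. (\<lambda>x. f' x b) \<in> SM" by blast
  have "(\<lambda>x. frechet_derivative (iter_partial bs f) (at x) b) = (\<lambda>x. f' x b)"
    using f'(1) frechet_derivative_at by metis
  then show ?case using f'(2) by simp
qed

lemma SM_smooth: "f \<in> SM \<Longrightarrow> smooth_fun f"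
  unfolding smooth_fun_def
proof (intro allI impI)
  fix bs :: "'a list" and x assume "f \<in> SM"
  then have "iter_partial bs f \<in> SM" by (rule SM_iter)
  from SM_deriv[OF this] show "iter_partial bs f differentiable (at x)"
    unfolding differentiable_def by blast
qed

lemma SM_prod: "finite I \<Longrightarrow> (\<And>i. i \<in> I \<Longrightarrow> f i \<in> SM) \<Longrightarrow> (\<lambda>x. \<Prod>i\<in>I. f i x) \<in> SM"
proof (induction I rule: finite_induct)
  case empty then show ?case by (simp add: SM.const)
next
  case (insert a I) then show ?case by (simp add: SM.mult)
qed



lemma ae_zero_boxes_borel:
  fixes g :: "'a::euclidean_space \<Rightarrow> real"
  assumes int: "integrable lborel g"
    and box0: "\<And>a b. (\<integral>x. indicator (box a b) x * g x \<partial>lborel) = 0"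
  shows "AE x in lborel. g x = 0"
proof -
  have gm[measurable]: "g \<in> borel_measurable lborel" using int by auto
  have fin1: "(\<integral>\<^sup>+x. ennreal (g x) \<partial>lborel) < \<infinity>" and fin2: "(\<integral>\<^sup>+x. ennreal (- g x) \<partial>lborel) < \<infinity>"
    using int unfolding real_integrable_def by (auto simp: less_top)
  have intA: "integrable lborel (\<lambda>x. indicator A x * g x)" if "A \<in> sets borel" for A
    using integrable_mult_indicator[OF _ int, of A] that by (simp add: mult.commute)
  have nnA: "(\<integral>\<^sup>+x. ennreal (c * g x) * indicator A x \<partial>lborel) < \<infinity>" if "A \<in> sets borel" "c = 1 \<or> c = -1" for A c
  proof -
    have "(\<integral>\<^sup>+x. ennreal (c * g x) * indicator A x \<partial>lborel) \<le> (\<integral>\<^sup>+x. ennreal (c * g x) \<partial>lborel)"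
      by (intro nn_integral_mono) (auto simp: indicator_def)
    also have "\<dots> < \<infinity>" using fin1 fin2 that(2) by auto
    finally show ?thesis .
  qed
  have key: "(\<integral>\<^sup>+x. ennreal (g x) * indicator A x \<partial>lborel) = (\<integral>\<^sup>+x. ennreal (- g x) * indicator A x \<partial>lborel)
     \<longleftrightarrow> (\<integral>x. indicator A x * g x \<partial>lborel) = 0" if A: "A \<in> sets borel" for A
  proof -
    have e1: "(\<integral>\<^sup>+x. ennreal (indicator A x * g x) \<partial>lborel) = (\<integral>\<^sup>+x. ennreal (g x) * indicator A x \<partial>lborel)"
      by (intro nn_integral_cong) (auto simp: indicator_def)
    have e2: "(\<integral>\<^sup>+x. ennreal (- (indicator A x * g x)) \<partial>lborel) = (\<integral>\<^sup>+x. ennreal (- g x) * indicator A x \<partial>lborel)"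
      by (intro nn_integral_cong) (auto simp: indicator_def)
    have f1: "(\<integral>\<^sup>+x. ennreal (g x) * indicator A x \<partial>lborel) < \<infinity>" using nnA[OF A, of 1] by simp
    have f2: "(\<integral>\<^sup>+x. ennreal (- g x) * indicator A x \<partial>lborel) < \<infinity>" using nnA[OF A, of "-1"] by simp
    have "(\<integral>x. indicator A x * g x \<partial>lborel) = enn2real (\<integral>\<^sup>+x. ennreal (g x) * indicator A x \<partial>lborel) - enn2real (\<integral>\<^sup>+x. ennreal (- g x) * indicator A x \<partial>lborel)"
      using real_lebesgue_integral_def[OF intA[OF A]] e1 e2 by simp
    moreover have "enn2real X = enn2real Y \<longleftrightarrow> X = Y" if "X < \<infinity>" "Y < \<infinity>" for X Y :: ennreal
      using that by (metis ennreal_enn2real infinity_ennreal_def)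
    ultimately show ?thesis using f1 f2 by simp
  qed
  have "density lborel (\<lambda>x. ennreal (g x)) = density lborel (\<lambda>x. ennreal (- g x))"
  proof (rule measure_eqI_generator_eq[where \<Omega>=UNIV and E="range (\<lambda>(a, b). box a b::'a set)"
        and A="\<lambda>n::nat. box (- (real n *\<^sub>R One)) (real n *\<^sub>R One)"])
    show "Int_stable (range (\<lambda>(a, b). box a b::'a set))"
      by (auto simp: Int_stable_def box_Int_box)
    show "range (\<lambda>(a, b). box a b::'a set) \<subseteq> Pow UNIV" by simp
    show "sets (density lborel (\<lambda>x. ennreal (g x))) = sigma_sets UNIV (range (\<lambda>(a, b). box a b))"
      "sets (density lborel (\<lambda>x. ennreal (- g x))) = sigma_sets UNIV (range (\<lambda>(a, b). box a b))"
      by (simp_all add: borel_eq_box)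
    show "range (\<lambda>n::nat. box (- (real n *\<^sub>R One)) (real n *\<^sub>R One) :: 'a set) \<subseteq> range (\<lambda>(a, b). box a b)"
      "(\<Union>n::nat. box (- (real n *\<^sub>R One)) (real n *\<^sub>R One) :: 'a set) = UNIV"
      unfolding UN_box_eq_UNIV by auto
    show "emeasure (density lborel (\<lambda>x. ennreal (g x))) (box (- (real n *\<^sub>R One)) (real n *\<^sub>R One)) \<noteq> \<infinity>" for n
      using nnA[of "box (- (real n *\<^sub>R One)) (real n *\<^sub>R One)" 1] by (simp add: emeasure_density)
    fix X assume "X \<in> range (\<lambda>(a, b). box a b::'a set)"
    then obtain a b where X: "X = box a b" by auto
    show "emeasure (density lborel (\<lambda>x. ennreal (g x))) X = emeasure (density lborel (\<lambda>x. ennreal (- g x))) X"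
      using key[of X] box0[of a b] X by (simp add: emeasure_density)
  qed
  then have "(\<integral>x. indicator A x * g x \<partial>lborel) = 0" if "A \<in> sets borel" for A
  proof -
    have "emeasure (density lborel (\<lambda>x. ennreal (g x))) A = emeasure (density lborel (\<lambda>x. ennreal (- g x))) A"
      using \<open>density lborel _ = _\<close> by simp
    then show ?thesis using key[OF that] that by (simp add: emeasure_density)
  qed
  then show ?thesis
    by (intro density_unique_real[OF int, of "\<lambda>_. 0", simplified]) (simp add: set_lebesgue_integral_def)
qed

lemma ae_zero_boxes:
  fixes F :: "'a::euclidean_space \<Rightarrow> real"
  assumes int: "integrable lebesgue F"
    and box0: "\<And>a b. (\<integral>x. indicator (box a b) x * F x \<partial>lebesgue) = 0"
  shows "AE x in lebesgue. F x = 0"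
proof -
  have "F \<in> borel_measurable lebesgue" using int by auto
  from completion_ex_borel_measurable_real[OF this] obtain g where
    g[measurable]: "g \<in> borel_measurable lborel" and ae: "AE x in lborel. F x = g x" by auto
  have ae': "AE x in lebesgue. F x = g x" using AE_completion[OF ae] .
  have gl: "g \<in> borel_measurable lebesgue"
    using g measurable_completion by blast
  have "integrable lebesgue g" using integrable_cong_AE_imp[OF int gl ae'] .
  then have ig: "integrable lborel g" using integrable_completion[of g lborel] g by simp
  have "(\<integral>x. indicator (box a b) x * g x \<partial>lborel) = 0" for a b
  proof -
    have "(\<integral>x. indicator (box a b) x * g x \<partial>lborel) = (\<integral>x. indicator (box a b) x * g x \<partial>lebesgue)"
      by (rule integral_completion[symmetric]) simp
    also have "\<dots> = (\<integral>x. indicator (box a b) x * F x \<partial>lebesgue)"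
    proof (rule integral_cong_AE)
      show "(\<lambda>x. indicator (box a b) x * g x) \<in> borel_measurable lebesgue" by (intro borel_measurable_times borel_measurable_indicator gl) auto
      show "(\<lambda>x. indicator (box a b) x * F x) \<in> borel_measurable lebesgue" by (intro borel_measurable_times borel_measurable_indicator \<open>F \<in> _\<close>) auto
      show "AE x in lebesgue. indicator (box a b) x * g x = indicator (box a b) x * F x"
        using ae' by eventually_elim simp
    qed
    finally show ?thesis using box0 by simp
  qed
  from ae_zero_boxes_borel[OF ig this] have "AE x in lebesgue. g x = 0" by (rule AE_completion)
  with ae' show ?thesis by eventually_elim simp
qed



lemma ee0: "ee 0 t = (if 0 < t then exp (- inverse t) else 0)"
  by (simp add: ee_def)

lemma ee0_nonneg: "0 \<le> ee 0 t" by (simp add: ee0)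
lemma ee0_le1: "ee 0 t \<le> 1" by (simp add: ee0)
lemma ee0_pos: "ee 0 t = 0 \<longleftrightarrow> t \<le> 0" by (simp add: ee0)

definition bump :: "nat \<Rightarrow> 'a \<Rightarrow> 'a \<Rightarrow> 'a::euclidean_space \<Rightarrow> real" where
  "bump n a b x = (\<Prod>i\<in>Basis. ee 0 (real n * (x \<bullet> i - a \<bullet> i)) * ee 0 (real n * (b \<bullet> i - x \<bullet> i)))"

lemma bump_SM: "bump n a b \<in> SM"
proof -
  have "(\<lambda>x. \<Prod>i\<in>Basis. (\<lambda>x. ee 0 ((real n *\<^sub>R i) \<bullet> x + (- (real n * (a \<bullet> i))))) x * (\<lambda>x. ee 0 ((- (real n *\<^sub>R i)) \<bullet> x + real n * (b \<bullet> i))) x) \<in> SM"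
    by (intro SM_prod SM.mult SM.atom) auto
  moreover have "(\<lambda>x. \<Prod>i\<in>Basis. (\<lambda>x. ee 0 ((real n *\<^sub>R i) \<bullet> x + (- (real n * (a \<bullet> i))))) x * (\<lambda>x. ee 0 ((- (real n *\<^sub>R i)) \<bullet> x + real n * (b \<bullet> i))) x) = bump n a b"
    unfolding bump_def by (intro ext prod.cong refl) (simp add: algebra_simps inner_commute)
  ultimately show ?thesis by simp
qed

lemma bump_nonneg: "0 \<le> bump n a b x"
  unfolding bump_def by (intro prod_nonneg mult_nonneg_nonneg ee0_nonneg)

lemma bump_le1: "bump n a b x \<le> 1"
  unfolding bump_def by (intro prod_le_1 conjI mult_nonneg_nonneg ee0_nonneg mult_le_one ee0_le1)

lemma bump_nz: "0 < n \<Longrightarrow> bump n a b x \<noteq> 0 \<longleftrightarrow> x \<in> box a b"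
  unfolding bump_def mem_box by (auto simp: ee0_pos mult_le_0_iff)

lemma bump_zero_outside: "x \<notin> box a b \<Longrightarrow> bump (Suc n) a b x = 0"
  using bump_nz[of "Suc n" a b x] by auto

lemma bump_lim: "(\<lambda>n. bump (Suc n) a b x) \<longlonglongrightarrow> indicator (box a b) x"
proof (cases "x \<in> box a b")
  case True
  have f: "(\<lambda>n. ee 0 (real (Suc n) * t)) \<longlonglongrightarrow> 1" if "t > 0" for t
  proof -
    have "(\<lambda>n. inverse t * inverse (real (Suc n))) \<longlonglongrightarrow> inverse t * 0"
      by (intro tendsto_mult tendsto_const LIMSEQ_inverse_real_of_nat)
    then have "(\<lambda>n. exp (- (inverse t * inverse (real (Suc n))))) \<longlonglongrightarrow> exp (- (inverse t * 0))"
      by (intro tendsto_exp tendsto_minus)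
    moreover have "ee 0 (real (Suc n) * t) = exp (- (inverse t * inverse (real (Suc n))))" for n
      using that by (simp add: ee0 mult.commute)
    ultimately show ?thesis by simp
  qed
  have "(\<lambda>n. bump (Suc n) a b x) \<longlonglongrightarrow> (\<Prod>i\<in>(Basis::'a set). 1 * 1)"
    unfolding bump_def
  proof (rule tendsto_prod[where f="\<lambda>i n. ee 0 (real (Suc n) * (x \<bullet> i - a \<bullet> i)) * ee 0 (real (Suc n) * (b \<bullet> i - x \<bullet> i))" and L="\<lambda>_. 1 * 1"])
    fix i :: 'a assume i: "i \<in> Basis"
    show "(\<lambda>n. ee 0 (real (Suc n) * (x \<bullet> i - a \<bullet> i)) * ee 0 (real (Suc n) * (b \<bullet> i - x \<bullet> i))) \<longlonglongrightarrow> 1 * 1"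
      by (intro tendsto_mult f) (use True i in \<open>auto simp: mem_box\<close>)
  qed
  then show ?thesis using True by simp
next
  case False
  then show ?thesis using bump_zero_outside[OF False] by simp
qed

lemma SM_cont: "f \<in> SM \<Longrightarrow> continuous_on UNIV f"
proof -
  assume "f \<in> SM"
  from SM_deriv[OF this] obtain f' where "\<forall>x. (f has_derivative f' x) (at x)" by blast
  then show ?thesis
    by (meson continuous_at_imp_continuous_on has_derivative_continuous)
qed

lemma SM_meas: "f \<in> SM \<Longrightarrow> f \<in> borel_measurable lebesgue"
proof -
  assume "f \<in> SM"
  then have "f \<in> borel_measurable borel" using SM_cont borel_measurable_continuous_onI by blast
  then have "f \<in> borel_measurable lborel" by simp
  then show ?thesis using measurable_completion by blast
qed

lemma bump_test: "closure (box a b) \<subseteq> U \<Longrightarrow> test_fun U (bump (Suc n) a b)"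
proof -
  assume U: "closure (box a b) \<subseteq> U"
  have "{x. bump (Suc n) a b x \<noteq> 0} = box a b" using bump_nz[of "Suc n"] by auto
  then show ?thesis unfolding test_fun_def
    using U SM_smooth[OF bump_SM] by (simp add: compact_closure bounded_box)
qed

lemma fund_box:
  fixes h :: "'a::euclidean_space \<Rightarrow> real"
  assumes L: "L1_loc U h" and T: "\<forall>\<phi>. test_fun U \<phi> \<longrightarrow> (LINT x:U|lebesgue. h x * \<phi> x) = 0"
    and sub: "closure (box a b) \<subseteq> U"
  shows "(\<integral>x. indicator (box a b) x * h x \<partial>lebesgue) = 0"
proof -
  define K where "K = closure (box a b)"
  have "compact K" unfolding K_def by (simp add: compact_closure bounded_box)
  then have iK: "integrable lebesgue (\<lambda>x. indicator K x * h x)"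
    using L sub unfolding L1_loc_def set_integrable_def K_def by auto
  have mK: "(\<lambda>x. indicator K x * h x) \<in> borel_measurable lebesgue" using iK by auto
  have bK: "box a b \<subseteq> K" unfolding K_def by (rule closure_subset)
  have KU: "K \<subseteq> U" using sub K_def by simp
  define s where "s n x = indicator K x * h x * bump (Suc n) a b x" for n x
  have s_eq: "s n x = indicator U x *\<^sub>R (h x * bump (Suc n) a b x)" for n x
    using bump_zero_outside[of x a b n] bK KU by (auto simp: s_def indicator_def)
  have lim: "(\<lambda>n. integral\<^sup>L lebesgue (s n)) \<longlonglongrightarrow> integral\<^sup>L lebesgue (\<lambda>x. indicator (box a b) x * h x)"
  proof (rule integral_dominated_convergence[where w="\<lambda>x. \<bar>indicator K x * h x\<bar>"])
    have "(\<lambda>x. indicator (box a b) x * (indicator K x * h x)) \<in> borel_measurable lebesgue"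
      by (intro borel_measurable_times borel_measurable_indicator mK) auto
    moreover have "indicator (box a b) x * (indicator K x * h x) = indicator (box a b) x * h x" for x
      using bK by (auto simp: indicator_def)
    ultimately show "(\<lambda>x. indicator (box a b) x * h x) \<in> borel_measurable lebesgue" by simp
    show "s n \<in> borel_measurable lebesgue" for n
      unfolding s_def by (intro borel_measurable_times mK SM_meas bump_SM)
    show "integrable lebesgue (\<lambda>x. \<bar>indicator K x * h x\<bar>)" using iK by (rule integrable_abs)
    show "AE x in lebesgue. (\<lambda>n. s n x) \<longlonglongrightarrow> indicator (box a b) x * h x"
    proof (rule AE_I2)
      fix x
      have "(\<lambda>n. indicator K x * h x * bump (Suc n) a b x) \<longlonglongrightarrow> indicator K x * h x * indicator (box a b) x"
        by (intro tendsto_mult tendsto_const bump_lim)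
      moreover have "indicator K x * h x * indicator (box a b) x = indicator (box a b) x * h x"
        using bK by (auto simp: indicator_def)
      ultimately show "(\<lambda>n. s n x) \<longlonglongrightarrow> indicator (box a b) x * h x" by (simp add: s_def)
    qed
    show "AE x in lebesgue. norm (s n x) \<le> \<bar>indicator K x * h x\<bar>" for n
    proof (rule AE_I2)
      fix x
      have "\<bar>indicator K x * h x * bump (Suc n) a b x\<bar> = \<bar>indicator K x * h x\<bar> * bump (Suc n) a b x"
        using bump_nonneg[of "Suc n" a b x] by (simp add: abs_mult)
      also have "\<dots> \<le> \<bar>indicator K x * h x\<bar> * 1"
        by (intro mult_left_mono bump_le1) auto
      finally show "norm (s n x) \<le> \<bar>indicator K x * h x\<bar>" by (simp add: s_def)
    qed
  qed
  have "integral\<^sup>L lebesgue (s n) = 0" for n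
  proof -
    have "integral\<^sup>L lebesgue (s n) = (LINT x:U|lebesgue. h x * bump (Suc n) a b x)"
      unfolding set_lebesgue_integral_def s_eq ..
    also have "\<dots> = 0" using T bump_test[OF sub] by blast
    finally show ?thesis .
  qed
  with lim show ?thesis by (simp add: LIMSEQ_const_iff)
qed

lemma fund_lemma:
  fixes h :: "'a::euclidean_space \<Rightarrow> real"
  assumes U: "open U" and L: "L1_loc U h" and T: "\<forall>\<phi>. test_fun U \<phi> \<longrightarrow> (LINT x:U|lebesgue. h x * \<phi> x) = 0"
  shows "AE x in lebesgue. x \<in> U \<longrightarrow> h x = 0"
proof -
  have one: "AE x in lebesgue. x \<in> box c d \<longrightarrow> h x = 0" if cd: "closure (box c d) \<subseteq> U" for c d
  proof -
    define K where "K = closure (box c d)"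
    have "compact K" unfolding K_def by (simp add: compact_closure bounded_box)
    then have iK: "integrable lebesgue (\<lambda>x. indicator K x * h x)"
      using L cd unfolding L1_loc_def set_integrable_def K_def by auto
    have bK: "box c d \<subseteq> K" unfolding K_def by (rule closure_subset)
    have eqF: "indicator (box c d) x * (indicator K x * h x) = indicator (box c d) x * h x" for x
      using bK by (auto simp: indicator_def)
    have iF: "integrable lebesgue (\<lambda>x. indicator (box c d) x * h x)"
      using integrable_mult_indicator[OF _ iK, of "box c d"] eqF by simp
    have "AE x in lebesgue. indicator (box c d) x * h x = 0"
    proof (rule ae_zero_boxes[OF iF])
      fix a b :: 'a
      obtain a' b' where ab': "box a b \<inter> box c d = box a' b'" using box_Int_box by blast
      have "closure (box a' b') \<subseteq> U"
        using cd closure_mono[of "box a' b'" "box c d"] ab' by blast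
      from fund_box[OF L T this]
      have "(\<integral>x. indicator (box a' b') x * h x \<partial>lebesgue) = 0" .
      moreover have "(\<lambda>x. indicator (box a b) x * (indicator (box c d) x * h x)) = (\<lambda>x. indicator (box a' b') x * h x)"
        using ab'[symmetric] by (auto simp: indicator_def fun_eq_iff)
      ultimately show "(\<integral>x. indicator (box a b) x * (indicator (box c d) x * h x) \<partial>lebesgue) = 0" by simp
    qed
    then show ?thesis by eventually_elim (auto simp: indicator_def split: if_splits)
  qed
  define QV where "QV = (\<lambda>f. \<Sum>i\<in>(Basis::'a set). f i *\<^sub>R i) ` (Basis \<rightarrow>\<^sub>E \<rat>)"
  have cQV: "countable QV" unfolding QV_def
    by (intro countable_image countable_PiE) (auto intro: countable_rat)
  define X where "X = {(a,b). a \<in> QV \<and> b \<in> QV \<and> closure (box a b) \<subseteq> U}"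
  have cX: "countable X"
    by (rule countable_subset[of _ "QV \<times> QV"]) (use cQV in \<open>auto simp: X_def\<close>)
  have "AE x in lebesgue. \<forall>ab\<in>X. x \<in> box (fst ab) (snd ab) \<longrightarrow> h x = 0"
    by (rule AE_ball_countable'[OF _ cX]) (use one in \<open>auto simp: X_def\<close>)
  then show ?thesis
  proof eventually_elim
    case (elim x)
    show ?case
    proof
      assume "x \<in> U"
      then obtain e where e: "e > 0" "ball x e \<subseteq> U" using U openE by blast
      obtain a b where ab: "\<forall>i\<in>Basis. a \<bullet> i \<in> \<rat> \<and> b \<bullet> i \<in> \<rat>" "x \<in> box a b" "box a b \<subseteq> ball x (e/2)"
        using rational_boxes[of "e/2" x] e by auto
      have "closure (box a b) \<subseteq> cball x (e/2)"
        using ab(3) ball_subset_cball closure_minimal closed_cball by (metis order_trans)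
      also have "\<dots> \<subseteq> ball x e" using e by (auto simp: subset_eq)
      finally have cl: "closure (box a b) \<subseteq> U" using e by blast
      have "v \<in> QV" if "\<forall>i\<in>Basis. v \<bullet> i \<in> \<rat>" for v :: 'a
      proof -
        have "v = (\<Sum>i\<in>Basis. (restrict (\<lambda>i. v \<bullet> i) Basis) i *\<^sub>R i)"
          by (simp add: euclidean_representation)
        moreover have "restrict (\<lambda>i. v \<bullet> i) Basis \<in> Basis \<rightarrow>\<^sub>E \<rat>" using that by auto
        ultimately show ?thesis unfolding QV_def by blast
      qed
      then have "(a, b) \<in> X" using ab(1) cl unfolding X_def by auto
      then show "h x = 0" using bspec[OF elim \<open>(a, b) \<in> X\<close>] ab(2) by simp
    qed
  qed
qed



lemma L1_loc_meas:
  fixes f :: "'a::euclidean_space \<Rightarrow> real"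
  assumes U: "open U" and L: "L1_loc U f"
  shows "(\<lambda>x. indicator U x * f x) \<in> borel_measurable lebesgue"
proof -
  obtain C where C: "\<And>n. compact(C n)" "\<And>n. C n \<subseteq> U" "\<And>n. C n \<subseteq> interior(C(Suc n))"
    "\<Union>(range C) = U"
    using open_Union_compact_subsets[OF U] by metis
  have m: "(\<lambda>x. indicator (C n) x * f x) \<in> borel_measurable lebesgue" for n
  proof -
    have "integrable lebesgue (\<lambda>x. indicator (C n) x *\<^sub>R f x)"
      using L C(1,2) unfolding L1_loc_def set_integrable_def by blast
    then show ?thesis by simp
  qed
  have inc: "C n \<subseteq> C m" if "n \<le> m" for n m
    using that
  proof (induction m)
    case 0 then show ?case by simp
  next
    case (Suc m)
    then show ?case
      using C(3)[of m] interior_subset[of "C (Suc m)"] le_Suc_eq by blast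
  qed
  show ?thesis
  proof (rule borel_measurable_LIMSEQ_real[OF _ m])
    fix x
    show "(\<lambda>n. indicator (C n) x * f x) \<longlonglongrightarrow> indicator U x * f x"
    proof (cases "x \<in> U")
      case True
      then obtain N where N: "x \<in> C N" using C(4) by blast
      have "\<forall>\<^sub>F n in sequentially. indicator U x * f x = indicator (C n) x * f x"
        unfolding eventually_sequentially using N inc True by (auto simp: indicator_def)
      then show ?thesis by (rule Lim_transform_eventually[OF tendsto_const])
    next
      case False
      then have "x \<notin> C n" for n using C(2) by blast
      then show ?thesis using False by simp
    qed
  qed
qed

lemma test_cont: "test_fun (U::'a::euclidean_space set) \<phi> \<Longrightarrow> continuous_on UNIV \<phi>"
proof -
  assume "test_fun U \<phi>"
  then have "smooth_fun \<phi>" unfolding test_fun_def by simp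
  then have "set [] \<subseteq> (Basis::'a set) \<longrightarrow> (\<forall>x. iter_partial [] \<phi> differentiable (at x))"
    unfolding smooth_fun_def by (rule spec)
  then have "\<forall>x. iter_partial [] \<phi> differentiable (at x)" by simp
  then have d: "\<forall>x. \<phi> differentiable (at x)" by simp
  show ?thesis
    by (intro continuous_at_imp_continuous_on ballI differentiable_imp_continuous_within) (use d in simp)
qed

lemma test_meas: "test_fun U \<phi> \<Longrightarrow> \<phi> \<in> borel_measurable lebesgue"
proof -
  assume "test_fun U \<phi>"
  then have "\<phi> \<in> borel_measurable borel" using test_cont borel_measurable_continuous_onI by blast
  then have "\<phi> \<in> borel_measurable lborel" by simp
  then show ?thesis using measurable_completion by blast
qed

lemma test_deriv_zero:
  assumes T: "test_fun U \<phi>" and x: "x \<notin> closure {x. \<phi> x \<noteq> 0}"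
  shows "frechet_derivative \<phi> (at x) b = 0"
proof -
  have d: "((\<lambda>_. 0::real) has_derivative (\<lambda>h. 0)) (at x)" by simp
  have "(\<phi> has_derivative (\<lambda>h. 0)) (at x)"
  proof (rule has_derivative_transform_within_open[OF d, of "- closure {x. \<phi> x \<noteq> 0}"])
    show "open (- closure {x. \<phi> x \<noteq> 0})" by auto
    show "x \<in> - closure {x. \<phi> x \<noteq> 0}" using x by simp
    fix y assume "y \<in> - closure {x. \<phi> x \<noteq> 0}"
    then have "y \<notin> {x. \<phi> x \<noteq> 0}" using closure_subset[of "{x. \<phi> x \<noteq> 0}"] by blast
    then show "0 = \<phi> y" by simp
  qed
  then have "(\<lambda>h. 0) = frechet_derivative \<phi> (at x)" by (rule frechet_derivative_at)
  from fun_cong[OF this, of b] show ?thesis by simp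
qed

lemma test_int:
  fixes g :: "'a::euclidean_space \<Rightarrow> real"
  assumes L: "L1_loc U g" and T: "test_fun U \<phi>"
  shows "set_integrable lebesgue U (\<lambda>x. g x * \<phi> x)"
proof -
  define K where "K = closure {x. \<phi> x \<noteq> 0}"
  have K: "compact K" "K \<subseteq> U" using T unfolding test_fun_def K_def by auto
  have iK: "integrable lebesgue (\<lambda>x. indicator K x * g x)"
    using L K unfolding L1_loc_def set_integrable_def by auto
  have "compact (\<phi> ` K)" using compact_continuous_image continuous_on_subset[OF test_cont[OF T]] K(1) by blast
  then have "bounded (\<phi> ` K)" by (rule compact_imp_bounded)
  then obtain B where B: "\<forall>y\<in>\<phi> ` K. norm y \<le> B" unfolding bounded_iff by blast
  have Bx: "\<bar>\<phi> x\<bar> \<le> \<bar>B\<bar>" for x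
  proof (cases "x \<in> K")
    case True then have "norm (\<phi> x) \<le> B" using B by blast
    then show ?thesis by simp
  next
    case False then have "x \<notin> {x. \<phi> x \<noteq> 0}" using closure_subset[of "{x. \<phi> x \<noteq> 0}"] unfolding K_def by blast
    then have "\<phi> x = 0" by simp
    then show ?thesis by simp
  qed
  have eq: "indicator U x *\<^sub>R (g x * \<phi> x) = indicator K x * g x * \<phi> x" for x
  proof (cases "x \<in> K")
    case True then show ?thesis using K(2) by (auto simp: indicator_def)
  next
    case False then have "x \<notin> {x. \<phi> x \<noteq> 0}" using closure_subset[of "{x. \<phi> x \<noteq> 0}"] unfolding K_def by blast
    then have "\<phi> x = 0" by simp
    then show ?thesis using False by simp
  qed
  have "integrable lebesgue (\<lambda>x. indicator K x * g x * \<phi> x)"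
  proof (rule Bochner_Integration.integrable_bound[where f="\<lambda>x. \<bar>B\<bar> * (indicator K x * g x)"])
    show "integrable lebesgue (\<lambda>x. \<bar>B\<bar> * (indicator K x * g x))" using iK by (rule integrable_mult_right)
    show "(\<lambda>x. indicator K x * g x * \<phi> x) \<in> borel_measurable lebesgue"
    proof -
      have "(\<lambda>x. indicator K x * g x) \<in> borel_measurable lebesgue" using iK by auto
      then show ?thesis using test_meas[OF T] by (rule borel_measurable_times)
    qed
    show "AE x in lebesgue. norm (indicator K x * g x * \<phi> x) \<le> norm (\<bar>B\<bar> * (indicator K x * g x))"
    proof (rule AE_I2)
      fix x
      have "\<bar>indicator K x * g x * \<phi> x\<bar> = \<bar>indicator K x * g x\<bar> * \<bar>\<phi> x\<bar>" by (simp add: abs_mult)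
      also have "\<dots> \<le> \<bar>indicator K x * g x\<bar> * \<bar>B\<bar>" by (intro mult_left_mono Bx) auto
      finally show "norm (indicator K x * g x * \<phi> x) \<le> norm (\<bar>B\<bar> * (indicator K x * g x))"
        by (simp add: abs_mult mult.commute)
    qed
  qed
  then show ?thesis unfolding set_integrable_def eq .
qed

lemma test_fun_mono: "test_fun D \<phi> \<Longrightarrow> D \<subseteq> \<Omega> \<Longrightarrow> test_fun \<Omega> \<phi>"
  unfolding test_fun_def by auto

lemma L1_loc_mono: "L1_loc \<Omega> f \<Longrightarrow> D \<subseteq> \<Omega> \<Longrightarrow> L1_loc D f"
  unfolding L1_loc_def by auto

lemma weak_restrict:
  assumes D: "D \<subseteq> \<Omega>" and W: "weak_partial \<Omega> b u g"
  shows "weak_partial D b u g"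
  unfolding weak_partial_def
proof (intro allI impI)
  fix \<phi> assume T: "test_fun D \<phi>"
  then have T': "test_fun \<Omega> \<phi>" using D by (rule test_fun_mono)
  have e1: "(LINT x:D|lebesgue. u x * frechet_derivative \<phi> (at x) b) = (LINT x:\<Omega>|lebesgue. u x * frechet_derivative \<phi> (at x) b)"
    unfolding set_lebesgue_integral_def
  proof (intro arg_cong[where f="integral\<^sup>L lebesgue"] ext)
    fix x
    show "indicator D x *\<^sub>R (u x * frechet_derivative \<phi> (at x) b) = indicator \<Omega> x *\<^sub>R (u x * frechet_derivative \<phi> (at x) b)"
    proof (cases "x \<in> closure {x. \<phi> x \<noteq> 0}")
      case True then have "x \<in> D" using T unfolding test_fun_def by blast
      then show ?thesis using D by (auto simp: indicator_def)
    next
      case False then show ?thesis using test_deriv_zero[OF T False] by simp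
    qed
  qed
  have e2: "(LINT x:D|lebesgue. g x * \<phi> x) = (LINT x:\<Omega>|lebesgue. g x * \<phi> x)"
    unfolding set_lebesgue_integral_def
  proof (intro arg_cong[where f="integral\<^sup>L lebesgue"] ext)
    fix x
    show "indicator D x *\<^sub>R (g x * \<phi> x) = indicator \<Omega> x *\<^sub>R (g x * \<phi> x)"
    proof (cases "\<phi> x = 0")
      case False then have "x \<in> closure {x. \<phi> x \<noteq> 0}" using closure_subset[of "{x. \<phi> x \<noteq> 0}"] by blast
      then have "x \<in> D" using T unfolding test_fun_def by blast
      then show ?thesis using D by (auto simp: indicator_def)
    qed simp
  qed
  show "(LINT x:D|lebesgue. u x * frechet_derivative \<phi> (at x) b) = - (LINT x:D|lebesgue. g x * \<phi> x)"
    using W T' unfolding weak_partial_def e1 e2 by blast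
qed

lemma weak_unique:
  fixes g1 g2 :: "'a::euclidean_space \<Rightarrow> real"
  assumes D: "open D" and L1: "L1_loc D g1" and L2: "L1_loc D g2"
    and W1: "weak_partial D b u g1" and W2: "weak_partial D b u g2"
  shows "AE x in lebesgue. x \<in> D \<longrightarrow> g1 x = g2 x"
proof -
  have L: "L1_loc D (\<lambda>x. g1 x - g2 x)"
    using L1 L2 unfolding L1_loc_def by auto
  have "\<forall>\<phi>. test_fun D \<phi> \<longrightarrow> (LINT x:D|lebesgue. (g1 x - g2 x) * \<phi> x) = 0"
  proof (intro allI impI)
    fix \<phi> assume T: "test_fun D \<phi>"
    have "(LINT x:D|lebesgue. (g1 x - g2 x) * \<phi> x) = (LINT x:D|lebesgue. g1 x * \<phi> x - g2 x * \<phi> x)"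
      by (simp add: left_diff_distrib)
    also have "\<dots> = (LINT x:D|lebesgue. g1 x * \<phi> x) - (LINT x:D|lebesgue. g2 x * \<phi> x)"
      using test_int[OF L1 T] test_int[OF L2 T] by (rule set_integral_diff(2))
    also have "\<dots> = 0"
    proof -
      have "(LINT x:D|lebesgue. u x * frechet_derivative \<phi> (at x) b) = - (LINT x:D|lebesgue. g1 x * \<phi> x)"
        using W1 T unfolding weak_partial_def by blast
      moreover have "(LINT x:D|lebesgue. u x * frechet_derivative \<phi> (at x) b) = - (LINT x:D|lebesgue. g2 x * \<phi> x)"
        using W2 T unfolding weak_partial_def by blast
      ultimately show ?thesis by simp
    qed
    finally show "(LINT x:D|lebesgue. (g1 x - g2 x) * \<phi> x) = 0" .
  qed
  from fund_lemma[OF D L this] show ?thesis by eventually_elim simp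
qed



lemma LpD:
  assumes "Lp_var \<Omega> P f" "D \<subseteq> \<Omega>" "\<And>x. x \<in> D \<Longrightarrow> P x = q"
  shows "Lp_var D (\<lambda>_. q) f"
proof -
  have "set_nn_integral lebesgue D (\<lambda>x. ennreal (\<bar>f x\<bar> powr q)) \<le> set_nn_integral lebesgue \<Omega> (\<lambda>x. ennreal (\<bar>f x\<bar> powr P x))"
    by (intro nn_integral_mono) (use assms(2,3) in \<open>auto simp: indicator_def\<close>)
  then show ?thesis using assms(1,2) unfolding Lp_var_def using L1_loc_mono by (auto simp: le_less_trans)
qed

lemma powr_meas:
  fixes f :: "'a::euclidean_space \<Rightarrow> real"
  assumes A: "open A" "L1_loc A f" and Q: "Q \<in> borel_measurable lebesgue"
  shows "(\<lambda>x. ennreal (\<bar>f x\<bar> powr Q x) * indicator A x) \<in> borel_measurable lebesgue"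
proof -
  have m: "(\<lambda>x. indicator A x * f x) \<in> borel_measurable lebesgue" by (rule L1_loc_meas[OF A])
  have "(\<lambda>x. ennreal (\<bar>indicator A x * f x\<bar> powr Q x)) \<in> borel_measurable lebesgue"
    using m Q by measurable
  moreover have "ennreal (\<bar>indicator A x * f x\<bar> powr Q x) = ennreal (\<bar>f x\<bar> powr Q x) * indicator A x" for x
    by (auto simp: indicator_def)
  ultimately show ?thesis by simp
qed

lemma LpMin:
  fixes f :: "'a::euclidean_space \<Rightarrow> real"
  assumes O: "open \<Omega>" and fin: "emeasure lebesgue \<Omega> < \<infinity>" and Lp: "Lp_var \<Omega> P f"
    and P: "P \<in> borel_measurable lebesgue" and q: "\<And>x. x \<in> \<Omega> \<Longrightarrow> q \<le> P x" "0 \<le> q"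
  shows "Lp_var \<Omega> (\<lambda>_. q) f"
proof -
  have L: "L1_loc \<Omega> f" and F: "set_nn_integral lebesgue \<Omega> (\<lambda>x. ennreal (\<bar>f x\<bar> powr P x)) < \<infinity>"
    using Lp unfolding Lp_var_def by auto
  have OS: "\<Omega> \<in> sets lebesgue" using O by auto
  have "set_nn_integral lebesgue \<Omega> (\<lambda>x. ennreal (\<bar>f x\<bar> powr q))
      \<le> (\<integral>\<^sup>+x. indicator \<Omega> x + ennreal (\<bar>f x\<bar> powr P x) * indicator \<Omega> x \<partial>lebesgue)"
  proof (intro nn_integral_mono)
    fix x
    show "ennreal (\<bar>f x\<bar> powr q) * indicator \<Omega> x \<le> indicator \<Omega> x + ennreal (\<bar>f x\<bar> powr P x) * indicator \<Omega> x"
    proof (cases "x \<in> \<Omega>")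
      case True
      show ?thesis
      proof (cases "\<bar>f x\<bar> \<le> 1")
        case le: True
        have "\<bar>f x\<bar> powr q \<le> 1" using powr_le1[OF q(2)] le by simp
        then have "ennreal (\<bar>f x\<bar> powr q) \<le> 1" by (simp add: ennreal_le_1)
        then show ?thesis using True by (simp add: add_increasing2)
      next
        case gt: False
        have "\<bar>f x\<bar> powr q \<le> \<bar>f x\<bar> powr P x" using powr_mono[of q "P x" "\<bar>f x\<bar>"] q(1)[OF True] gt by simp
        then have "ennreal (\<bar>f x\<bar> powr q) \<le> ennreal (\<bar>f x\<bar> powr P x)" by (rule ennreal_leI)
        then show ?thesis using True by (simp add: add_increasing)
      qed
    qed simp
  qed
  also have "\<dots> = emeasure lebesgue \<Omega> + set_nn_integral lebesgue \<Omega> (\<lambda>x. ennreal (\<bar>f x\<bar> powr P x))"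
    using powr_meas[OF O L P] OS by (subst nn_integral_add) auto
  also have "\<dots> < \<infinity>" using fin F by simp
  finally show ?thesis using L unfolding Lp_var_def by simp
qed

lemma LpCombine:
  fixes f f1 f2 :: "'a::euclidean_space \<Rightarrow> real"
  assumes O: "open \<Omega>" "open D1" "open D2" "D1 \<subseteq> \<Omega>" "D2 \<subseteq> \<Omega>"
    and L1: "Lp_var D1 (\<lambda>_. p1) f1" and L2: "Lp_var D2 (\<lambda>_. p2) f2"
    and L: "Lp_var \<Omega> (\<lambda>_. min p1 p2) f"
    and ae1: "AE x in lebesgue. x \<in> D1 \<longrightarrow> f x = f1 x"
    and ae2: "AE x in lebesgue. x \<in> D2 \<longrightarrow> f x = f2 x"
  shows "Lp_var \<Omega> (two_phase_exp D1 D2 p1 p2) f"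
proof -
  let ?G1 = "\<lambda>x. ennreal (\<bar>f1 x\<bar> powr p1) * indicator D1 x"
  let ?G2 = "\<lambda>x. ennreal (\<bar>f2 x\<bar> powr p2) * indicator D2 x"
  let ?G3 = "\<lambda>x. ennreal (\<bar>f x\<bar> powr min p1 p2) * indicator \<Omega> x"
  have Lf: "L1_loc \<Omega> f" and F3: "integral\<^sup>N lebesgue ?G3 < \<infinity>" using L unfolding Lp_var_def by auto
  have Lf1: "L1_loc D1 f1" and F1: "integral\<^sup>N lebesgue ?G1 < \<infinity>" using L1 unfolding Lp_var_def by auto
  have Lf2: "L1_loc D2 f2" and F2: "integral\<^sup>N lebesgue ?G2 < \<infinity>" using L2 unfolding Lp_var_def by auto
  have m1: "?G1 \<in> borel_measurable lebesgue" using powr_meas[OF O(2) Lf1, of "\<lambda>_. p1"] by simp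
  have m2: "?G2 \<in> borel_measurable lebesgue" using powr_meas[OF O(3) Lf2, of "\<lambda>_. p2"] by simp
  have m3: "?G3 \<in> borel_measurable lebesgue" using powr_meas[OF O(1) Lf, of "\<lambda>_. min p1 p2"] by simp
  have "set_nn_integral lebesgue \<Omega> (\<lambda>x. ennreal (\<bar>f x\<bar> powr two_phase_exp D1 D2 p1 p2 x))
     \<le> (\<integral>\<^sup>+x. ?G1 x + ?G2 x + ?G3 x \<partial>lebesgue)"
  proof (rule nn_integral_mono_AE)
    show "AE x in lebesgue. ennreal (\<bar>f x\<bar> powr two_phase_exp D1 D2 p1 p2 x) * indicator \<Omega> x \<le> ?G1 x + ?G2 x + ?G3 x"
      using ae1 ae2
    proof eventually_elim
      case (elim x)
      show ?case
      proof (cases "x \<in> D1")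
        case True
        then have "ennreal (\<bar>f x\<bar> powr two_phase_exp D1 D2 p1 p2 x) * indicator \<Omega> x = ?G1 x"
          using elim O(4) by (auto simp: two_phase_exp_def indicator_def)
        then show ?thesis by (simp add: add.assoc add_increasing2)
      next
        case nD1: False
        show ?thesis
        proof (cases "x \<in> D2")
          case True
          then have "ennreal (\<bar>f x\<bar> powr two_phase_exp D1 D2 p1 p2 x) * indicator \<Omega> x = ?G2 x"
            using elim O(5) nD1 by (auto simp: two_phase_exp_def indicator_def)
          then show ?thesis by (simp add: add_increasing2 add_increasing)
        next
          case False
          then have "ennreal (\<bar>f x\<bar> powr two_phase_exp D1 D2 p1 p2 x) * indicator \<Omega> x = ?G3 x"
            using nD1 by (auto simp: two_phase_exp_def indicator_def)
          then show ?thesis by (simp add: add_increasing)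
        qed
      qed
    qed
  qed
  also have "\<dots> = integral\<^sup>N lebesgue ?G1 + integral\<^sup>N lebesgue ?G2 + integral\<^sup>N lebesgue ?G3"
    using m1 m2 m3 by (simp add: nn_integral_add)
  also have "\<dots> < \<infinity>" using F1 F2 F3 by simp
  finally show ?thesis using Lf unfolding Lp_var_def by simp
qed



lemma W_restrict:
  assumes W: "W1p_var \<Omega> P u" and D: "D \<subseteq> \<Omega>" and q: "\<And>x. x \<in> D \<Longrightarrow> P x = q"
  shows "W1p D q u"
  unfolding W1p_def W1p_var_def
proof (intro conjI ballI)
  show "L1_loc D u" using W D L1_loc_mono unfolding W1p_var_def by blast
  show "Lp_var D (\<lambda>_. q) u" using W D q LpD unfolding W1p_var_def by blast
  fix b :: 'a assume b: "b \<in> Basis"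
  then obtain g where g: "L1_loc \<Omega> g" "weak_partial \<Omega> b u g" "Lp_var \<Omega> P g"
    using W unfolding W1p_var_def by blast
  show "\<exists>g. L1_loc D g \<and> weak_partial D b u g \<and> Lp_var D (\<lambda>_. q) g"
    using L1_loc_mono[OF g(1) D] weak_restrict[OF D g(2)] LpD[OF g(3) D q] by blast
qed

lemma W_min:
  assumes W: "W1p_var \<Omega> P u" and O: "open \<Omega>" and fin: "emeasure lebesgue \<Omega> < \<infinity>"
    and P: "P \<in> borel_measurable lebesgue" and q: "\<And>x. x \<in> \<Omega> \<Longrightarrow> q \<le> P x" "0 \<le> q"
  shows "W1p \<Omega> q u"
  unfolding W1p_def W1p_var_def
proof (intro conjI ballI)
  show "L1_loc \<Omega> u" using W unfolding W1p_var_def by blast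
  show "Lp_var \<Omega> (\<lambda>_. q) u" using W LpMin[OF O fin _ P q] unfolding W1p_var_def by blast
  fix b :: 'a assume b: "b \<in> Basis"
  then obtain g where g: "L1_loc \<Omega> g" "weak_partial \<Omega> b u g" "Lp_var \<Omega> P g"
    using W unfolding W1p_var_def by blast
  show "\<exists>g. L1_loc \<Omega> g \<and> weak_partial \<Omega> b u g \<and> Lp_var \<Omega> (\<lambda>_. q) g"
    using g LpMin[OF O fin g(3) P q] by blast
qed

lemma W_combine:
  assumes O: "open \<Omega>" "open D1" "open D2" "D1 \<subseteq> \<Omega>" "D2 \<subseteq> \<Omega>"
    and W1: "W1p D1 p1 u" and W2: "W1p D2 p2 u" and W: "W1p \<Omega> (min p1 p2) u"
  shows "W1p_var \<Omega> (two_phase_exp D1 D2 p1 p2) u"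
  unfolding W1p_var_def
proof (intro conjI ballI)
  show "L1_loc \<Omega> u" using W unfolding W1p_def W1p_var_def by blast
  show "Lp_var \<Omega> (two_phase_exp D1 D2 p1 p2) u"
    using W W1 W2 unfolding W1p_def W1p_var_def
    by (intro LpCombine[OF O, of p1 u p2 u]) auto
  fix b :: 'a assume b: "b \<in> Basis"
  obtain g where g: "L1_loc \<Omega> g" "weak_partial \<Omega> b u g" "Lp_var \<Omega> (\<lambda>_. min p1 p2) g"
    using W b unfolding W1p_def W1p_var_def by blast
  obtain g1 where g1: "L1_loc D1 g1" "weak_partial D1 b u g1" "Lp_var D1 (\<lambda>_. p1) g1"
    using W1 b unfolding W1p_def W1p_var_def by blast
  obtain g2 where g2: "L1_loc D2 g2" "weak_partial D2 b u g2" "Lp_var D2 (\<lambda>_. p2) g2"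
    using W2 b unfolding W1p_def W1p_var_def by blast
  have ae1: "AE x in lebesgue. x \<in> D1 \<longrightarrow> g x = g1 x"
    by (rule weak_unique[OF O(2) L1_loc_mono[OF g(1) O(4)] g1(1) weak_restrict[OF O(4) g(2)] g1(2)])
  have ae2: "AE x in lebesgue. x \<in> D2 \<longrightarrow> g x = g2 x"
    by (rule weak_unique[OF O(3) L1_loc_mono[OF g(1) O(5)] g2(1) weak_restrict[OF O(5) g(2)] g2(2)])
  show "\<exists>g. L1_loc \<Omega> g \<and> weak_partial \<Omega> b u g \<and> Lp_var \<Omega> (two_phase_exp D1 D2 p1 p2) g"
    using g LpCombine[OF O g1(3) g2(3) g(3) ae1 ae2] by blast
qed

theorem mainTheorem1:
  fixes \<Omega> D1 D2 :: "'a::euclidean_space set"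
    and p1 p2 :: real and u :: "'a \<Rightarrow> real"
  assumes "open \<Omega>" and "emeasure lebesgue \<Omega> < \<infinity>"
    and "D1 \<subseteq> \<Omega>" and "D2 \<subseteq> \<Omega>" and "open D1" and "open D2"
    and "interior (closure D1) = D1" and "interior (closure D2) = D2"
    and "D1 \<inter> D2 = {}" and "closure \<Omega> = closure D1 \<union> closure D2"
    and "1 \<le> p1" and "1 \<le> p2"
  shows "W1p_var \<Omega> (two_phase_exp D1 D2 p1 p2) u \<longleftrightarrow>
           (W1p D1 p1 u \<and> W1p D2 p2 u \<and> W1p \<Omega> (min p1 p2) u)"
proof
  assume W: "W1p_var \<Omega> (two_phase_exp D1 D2 p1 p2) u"
  have Pm: "two_phase_exp D1 D2 p1 p2 \<in> borel_measurable lebesgue"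
  proof -
    have s1: "D1 \<in> sets lebesgue" and s2: "D2 \<in> sets lebesgue" using assms(5,6) by auto
    have "(\<lambda>x. if x \<in> D1 then p1 else if x \<in> D2 then p2 else min p1 p2) \<in> borel_measurable lebesgue"
      using s1 s2 by (intro measurable_If_set measurable_const) auto
    then show ?thesis unfolding two_phase_exp_def[abs_def] .
  qed
  show "W1p D1 p1 u \<and> W1p D2 p2 u \<and> W1p \<Omega> (min p1 p2) u"
  proof (intro conjI)
    show "W1p D1 p1 u" using W_restrict[OF W assms(3)] by (simp add: two_phase_exp_def)
    show "W1p D2 p2 u"
      by (rule W_restrict[OF W assms(4)]) (use assms(9) in \<open>auto simp: two_phase_exp_def\<close>)
    show "W1p \<Omega> (min p1 p2) u"
      by (rule W_min[OF W assms(1,2) Pm]) (use assms(11,12) in \<open>auto simp: two_phase_exp_def\<close>)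
  qed
next
  assume "W1p D1 p1 u \<and> W1p D2 p2 u \<and> W1p \<Omega> (min p1 p2) u"
  then show "W1p_var \<Omega> (two_phase_exp D1 D2 p1 p2) u"
    using W_combine[OF assms(1) assms(5,6,3,4)] by blast
qed


end
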